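(* Let $d\in\mathbb{N}$. For every $r\in\mathcal{R}$, $$\mathrm{WA}(r)=\pi(\Pi_r)\qquad\text{and hence}\qquad \mathrm{Bad}(r)=\mathbb{R}^d\setminus\pi(\Pi_r).$$
   Context: For $t\in\mathbb{R}$, $\|t\|$ is the distance from $t$ to $\mathbb{Z}$. Write $\mathbb{N}=\{1,2,\dots\}$. $\mathcal{R}=\{r\in\mathbb{R}^d: r_i\ge0,\ \sum_i r_i=1\}$. For $r\in\mathcal{R}$ and $x=(x_i)\in\mathbb{R}^d$, set $$\|x\|_r=\Big(\max_{1\le i\le d}\|x_i\|^{1/r_i}\Big)^{1/d}.$$ $\mathrm{Bad}(r)=\{x\in\mathbb{R}^d:\inf_{n\in\mathbb{N}}n\|nx\|_r^d>0\}$ and $\mathrm{WA}(r)=\mathbb{R}^d\setminus\mathrm{Bad}(r)$. $\mathcal{D}$ is the set of all non-increasing $\psi:\mathbb{N}\to\mathbb{R}_{\ge0}$ with $\sum_n\psi(n)^d=\infty$. For $\psi:\mathbb{N}\to\mathbb{R}_{\ge0}$, $W(r,\psi)$ is the set of $(x,y)\in\mathbb{R}^d\times\mathbb{R}^d$ such that $\|nx+y\|_r<\psi(n)$ for infinitely many $n\in\mathbb{N}$. Then $\Pi_r=\bigcap_{\psi\in\mathcal{D}}W(r,\psi)$. $\pi(x,y)=x$ is the projection onto the first factor. *)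

theory Defs
  imports "HOL-Analysis.Analysis"
begin

definition distZ :: "real \<Rightarrow> real" where
  "distZ t = infdist t \<int>"

definition weights :: "(real ^ 'd) set" where
  "weights = {r. (\<forall>i. r $ i \<ge> 0) \<and> (\<Sum>i\<in>UNIV. r $ i) = 1}"

text \<open>\<open>\<parallel>t\<parallel>^(1/r_i)\<close>, with the convention that the value is 0 when r_i = 0
  (the limit of \<open>s^(1/\<rho>)\<close> as \<open>\<rho>\<rightarrow>0+\<close> for \<open>0 \<le> s \<le> 1/2\<close>).\<close>
definition rpow_comp :: "real \<Rightarrow> real \<Rightarrow> real" where
  "rpow_comp t \<rho> = (if \<rho> = 0 then 0 else distZ t powr (1 / \<rho>))"

definition rnorm :: "real ^ 'd \<Rightarrow> real ^ 'd \<Rightarrow> real" where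
  "rnorm r x = (Max (range (\<lambda>i. rpow_comp (x $ i) (r $ i)))) powr (1 / real CARD('d))"

definition Bad :: "real ^ 'd \<Rightarrow> (real ^ 'd) set" where
  "Bad r = {x. (INF n\<in>{1::nat..}. real n * (rnorm r (real n *\<^sub>R x)) ^ CARD('d)) > 0}"

definition WA :: "real ^ 'd \<Rightarrow> (real ^ 'd) set" where
  "WA r = UNIV - Bad r"

text \<open>Non-increasing functions \<open>\<nat> \<rightarrow> \<real>\<^sub>\<ge>\<^sub>0\<close> with divergent \<open>\<Sum> \<psi>(n)^d\<close>; the value at 0 is irrelevant.\<close>
definition Dfun :: "'d itself \<Rightarrow> (nat \<Rightarrow> real) set" where
  "Dfun _ = {\<psi>. (\<forall>n\<ge>1. \<psi> n \<ge> 0) \<and> (\<forall>m n. 1 \<le> m \<and> m \<le> n \<longrightarrow> \<psi> n \<le> \<psi> m)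
               \<and> \<not> summable (\<lambda>n. \<psi> (n + 1) ^ CARD('d))}"

definition Wset :: "real ^ 'd \<Rightarrow> (nat \<Rightarrow> real) \<Rightarrow> ((real ^ 'd) \<times> (real ^ 'd)) set" where
  "Wset r \<psi> = {(x, y). infinite {n::nat. n \<ge> 1 \<and> rnorm r (real n *\<^sub>R x + y) < \<psi> n}}"

definition PiSet :: "real ^ 'd \<Rightarrow> ((real ^ 'd) \<times> (real ^ 'd)) set" where
  "PiSet r = (\<Inter>\<psi>\<in>Dfun TYPE('d). Wset r \<psi>)"

end

theory Submission
  imports Defs
begin


lemma distZ_nonneg: "distZ t \<ge> 0"
  by (simp add: distZ_def infdist_nonneg)

lemma distZ_le: "z \<in> \<int> \<Longrightarrow> distZ t \<le> \<bar>t - z\<bar>"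
  unfolding distZ_def using infdist_le[of z \<int> t] by (simp add: dist_real_def)

lemma distZ_nearest: "\<exists>z\<in>\<int>. distZ t = \<bar>t - z\<bar>"
proof -
  obtain z where "z \<in> (\<int>::real set)" "infdist t \<int> = dist t z"
    using infdist_attains_inf[of "\<int>::real set" t] closed_Ints by blast
  thus ?thesis unfolding distZ_def dist_real_def by blast
qed

lemma distZ_add: "distZ (s + t) \<le> distZ s + distZ t"
proof -
  obtain a b where a: "a \<in> \<int>" "distZ s = \<bar>s - a\<bar>" and b: "b \<in> \<int>" "distZ t = \<bar>t - b\<bar>"
    using distZ_nearest by metis
  have "distZ (s + t) \<le> \<bar>s + t - (a + b)\<bar>" using a b by (intro distZ_le) auto
  also have "\<dots> \<le> \<bar>s - a\<bar> + \<bar>t - b\<bar>" by simp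
  finally show ?thesis using a b by simp
qed

lemma distZ_minus: "distZ (- t) = distZ t"
proof -
  have *: "distZ (- u) \<le> distZ u" for u
  proof -
    obtain a where a: "a \<in> \<int>" "distZ u = \<bar>u - a\<bar>" using distZ_nearest by metis
    have "distZ (- u) \<le> \<bar>- u - (- a)\<bar>" using a by (intro distZ_le) auto
    thus ?thesis using a by simp
  qed
  show ?thesis using *[of t] *[of "-t"] by simp
qed

lemma distZ_zero_Ints: "distZ t = 0 \<Longrightarrow> t \<in> \<int>"
  unfolding distZ_def using in_closed_iff_infdist_zero[of "\<int>::real set" t] closed_Ints by auto

lemma distZ_Ints: "t \<in> \<int> \<Longrightarrow> distZ t = 0"
  unfolding distZ_def by simp

lemma rpow_comp_nonneg: "rpow_comp t \<rho> \<ge> 0"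
  unfolding rpow_comp_def by simp

definition FF :: "real ^ 'd \<Rightarrow> real ^ 'd \<Rightarrow> real" where
  "FF r v = Max (range (\<lambda>i. rpow_comp (v $ i) (r $ i)))"

lemma FF_ge: "rpow_comp (v $ i) (r $ i) \<le> FF r v"
  unfolding FF_def by (rule Max_ge) auto

lemma FF_nonneg: "FF r v \<ge> 0"
  using FF_ge[of v _ r] rpow_comp_nonneg order_trans by blast

lemma FF_le: "(\<And>i. rpow_comp (v $ i) (r $ i) \<le> M) \<Longrightarrow> FF r v \<le> M"
  unfolding FF_def by (subst Max_le_iff) auto

lemma rnorm_eq: "rnorm r v = root CARD('d) (FF r v)" for v :: "real ^ 'd"
  unfolding rnorm_def FF_def[symmetric]
  using root_powr_inverse[of "CARD('d)" "FF r v"] FF_nonneg[of r v] by simp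

lemma rnorm_pow: "rnorm r v ^ CARD('d) = FF r v" for v :: "real ^ 'd"
  unfolding rnorm_eq using FF_nonneg[of r v] by simp

lemma FF_minus: "FF r (- v) = FF r v"
  unfolding FF_def rpow_comp_def by (simp add: distZ_minus)



definition KK :: "real ^ 'd \<Rightarrow> real" where
  "KK r = (\<Sum>i\<in>UNIV. 2 powr (1 / r $ i))"

lemma KK_ge: "2 powr (1 / r $ i) \<le> KK r"
  unfolding KK_def by (rule member_le_sum) auto

lemma KK_pos: "KK r > 0"
proof -
  have "(0::real) < 2 powr (1 / r $ undefined)" by simp
  thus ?thesis using KK_ge[of r undefined] by linarith
qed

lemma max_powr_le: "(a::real) \<ge> 0 \<Longrightarrow> b \<ge> 0 \<Longrightarrow> p \<ge> 0 \<Longrightarrow> (max a b) powr p \<le> a powr p + b powr p"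
  by (cases "a \<le> b") (auto simp: max_def)

lemma FF_add: 
  assumes "r \<in> weights"
  shows "FF r (u + v) \<le> KK r * (FF r u + FF r v)"
proof (rule FF_le)
  fix i
  show "rpow_comp ((u + v) $ i) (r $ i) \<le> KK r * (FF r u + FF r v)"
  proof (cases "r $ i = 0")
    case True
    thus ?thesis using FF_nonneg[of r u] FF_nonneg[of r v] KK_pos[of r]
      by (simp add: rpow_comp_def)
  next
    case False
    have rpos: "r $ i > 0" using assms False unfolding weights_def by (simp add: less_le)
    let ?p = "1 / r $ i"
    let ?a = "distZ (u $ i)" and ?b = "distZ (v $ i)"
    have "rpow_comp ((u + v) $ i) (r $ i) = distZ (u $ i + v $ i) powr ?p"
      using False by (simp add: rpow_comp_def)
    also have "\<dots> \<le> (2 * max ?a ?b) powr ?p"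
      using distZ_add[of "u $ i" "v $ i"] rpos distZ_nonneg
      by (intro powr_mono2) auto
    also have "\<dots> = 2 powr ?p * (max ?a ?b) powr ?p"
      using distZ_nonneg by (simp add: powr_mult)
    also have "\<dots> \<le> 2 powr ?p * (?a powr ?p + ?b powr ?p)"
      using distZ_nonneg rpos by (intro mult_left_mono max_powr_le) auto
    also have "\<dots> \<le> KK r * (FF r u + FF r v)"
    proof (rule mult_mono)
      show "2 powr ?p \<le> KK r" by (rule KK_ge)
      have "?a powr ?p \<le> FF r u" using FF_ge[of u i r] False by (simp add: rpow_comp_def)
      moreover have "?b powr ?p \<le> FF r v" using FF_ge[of v i r] False by (simp add: rpow_comp_def)
      ultimately show "?a powr ?p + ?b powr ?p \<le> FF r u + FF r v" by simp
      show "0 \<le> KK r" using KK_pos[of r] by simp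
      show "0 \<le> ?a powr ?p + ?b powr ?p" by simp
    qed
    finally show ?thesis .
  qed
qed



lemma strict_seq_ge: "(\<And>k. s k < s (Suc k)) \<Longrightarrow> s 0 + k \<le> (s k :: nat)"
  by (induction k) (auto simp: Suc_le_eq intro: le_less_trans)

lemma strict_seq_mono: "(\<And>k. s k < s (Suc k)) \<Longrightarrow> m \<le> k \<Longrightarrow> s m \<le> (s k :: nat)"
  by (metis lift_Suc_mono_less_iff linorder_not_less strict_mono_def strict_mono_less_eq)

lemma block_summable:
  fixes a h :: "nat \<Rightarrow> real" and s :: "nat \<Rightarrow> nat"
  assumes sm: "\<And>k. s k < s (Suc k)" and nn: "\<And>n. n \<ge> s 0 \<Longrightarrow> a n \<ge> 0"
    and bl: "\<And>k n. s k \<le> n \<Longrightarrow> n < s (Suc k) \<Longrightarrow> a n \<le> h k"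
    and su: "summable (\<lambda>k. (real (s (Suc k)) - real (s k)) * h k)"
  shows "summable a"
proof -
  let ?b = "\<lambda>k. (real (s (Suc k)) - real (s k)) * h k"
  have blk: "sum a {s k..<s (Suc k)} \<le> ?b k" for k
  proof -
    have "sum a {s k..<s (Suc k)} \<le> of_nat (card {s k..<s (Suc k)}) * h k"
      by (rule sum_bounded_above) (use bl in auto)
    thus ?thesis using sm[of k] by (simp add: of_nat_diff)
  qed
  have bnn: "?b k \<ge> 0" for k
  proof -
    have "a (s k) \<le> h k" using bl[of k "s k"] sm[of k] by simp
    moreover have "a (s k) \<ge> 0" using nn strict_seq_mono[of s, OF sm, of 0 k] by simp
    ultimately show ?thesis using sm[of k] by simp
  qed
  have part: "sum a {s 0..<s K} \<le> (\<Sum>k<K. ?b k)" for K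
  proof (induction K)
    case 0 then show ?case by simp
  next
    case (Suc K)
    have "sum a {s 0..<s (Suc K)} = sum a {s 0..<s K} + sum a {s K..<s (Suc K)}"
      using strict_seq_mono[of s, OF sm, of 0 K] sm[of K] by (simp add: sum.atLeastLessThan_concat)
    also have "\<dots> \<le> (\<Sum>k<K. ?b k) + ?b K" using Suc blk[of K] by linarith
    finally show ?case by simp
  qed
  have bd: "sum a {s 0..<s K} \<le> suminf ?b" for K
    using part[of K] sum_le_suminf[OF su, of "{..<K}"] bnn by fastforce
  have "summable (\<lambda>n. a (n + s 0))"
  proof (rule summableI_nonneg_bounded)
    show "0 \<le> a (n + s 0)" for n using nn by simp
    fix N
    have "(\<Sum>n<N. a (n + s 0)) = sum a {s 0..<N + s 0}"
      using sum.shift_bounds_nat_ivl[of a 0 "s 0" N] by (simp add: atLeast0LessThan)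
    also have "\<dots> \<le> sum a {s 0..<s N}"
      using strict_seq_ge[of s, OF sm, of N] nn by (intro sum_mono2) auto
    also have "\<dots> \<le> suminf ?b" by (rule bd)
    finally show "(\<Sum>n<N. a (n + s 0)) \<le> suminf ?b" .
  qed
  thus ?thesis by (simp add: summable_iff_shift)
qed

lemma block_not_summable:
  fixes a :: "nat \<Rightarrow> real" and s :: "nat \<Rightarrow> nat"
  assumes sm: "\<And>k. s k < s (Suc k)" and s0: "s 0 > 0" and ep: "\<epsilon> > 0"
    and nn: "\<And>n. a n \<ge> 0"
    and bl: "\<And>k n. s k \<le> n \<Longrightarrow> n < s (Suc k) \<Longrightarrow> a n \<ge> \<epsilon> / real (s (Suc k))"
  shows "\<not> summable a"
proof
  assume sa: "summable a"
  define x where "x k = (real (s (Suc k)) - real (s k)) / real (s (Suc k))" for k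
  have xnn: "x k \<ge> 0" for k using sm[of k] by (simp add: x_def)
  have blk: "\<epsilon> * x k \<le> sum a {s k..<s (Suc k)}" for k
  proof -
    have "of_nat (card {s k..<s (Suc k)}) * (\<epsilon> / real (s (Suc k))) \<le> sum a {s k..<s (Suc k)}"
      by (rule sum_bounded_below) (use bl in auto)
    thus ?thesis using sm[of k] by (simp add: of_nat_diff x_def mult.commute)
  qed
  have part: "\<epsilon> * (\<Sum>k<K. x k) \<le> sum a {s 0..<s K}" for K
  proof (induction K)
    case 0 then show ?case by simp
  next
    case (Suc K)
    have "sum a {s 0..<s (Suc K)} = sum a {s 0..<s K} + sum a {s K..<s (Suc K)}"
      using strict_seq_mono[of s, OF sm, of 0 K] sm[of K] by (simp add: sum.atLeastLessThan_concat)
    thus ?case using Suc blk[of K] by (simp add: distrib_left)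
  qed
  have "summable x"
  proof (rule summableI_nonneg_bounded)
    show "0 \<le> x n" for n by (rule xnn)
    fix K
    have "\<epsilon> * (\<Sum>k<K. x k) \<le> suminf a"
      using part[of K] sum_le_suminf[OF sa, of "{s 0..<s K}"] nn by fastforce
    thus "(\<Sum>k<K. x k) \<le> suminf a / \<epsilon>" using ep by (simp add: field_simps)
  qed
  then obtain K0 where K0: "\<And>m n. m \<ge> K0 \<Longrightarrow> norm (sum x {m..<n}) < 1/2"
    unfolding summable_Cauchy by (meson half_gt_zero less_numeral_extra(1))
  have ind: "real (s K0) \<ge> real (s K) * (1 - sum x {K0..<K})" if "K \<ge> K0" for K
    using that
  proof (induction K rule: dec_induct)
    case base then show ?case by simp
  next
    case (step K)
    let ?S = "sum x {K0..<K}"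
    have S0: "?S \<ge> 0" using xnn by (simp add: sum_nonneg)
    have sp: "real (s (Suc K)) > 0" using s0 strict_seq_mono[of s, OF sm, of 0 "Suc K"] by simp
    have eq: "real (s (Suc K)) * (1 - x K) = real (s K)"
      using sp by (simp add: x_def field_simps)
    have "real (s (Suc K)) * (1 - sum x {K0..<Suc K}) = real (s (Suc K)) * (1 - x K) - real (s (Suc K)) * ?S"
      using step(1) by (simp add: algebra_simps)
    also have "\<dots> \<le> real (s K) - real (s K) * ?S"
      using eq sm[of K] S0 by (simp add: mult_right_mono)
    also have "\<dots> \<le> real (s K0)" using step(3) by (simp add: algebra_simps)
    finally show ?case .
  qed
  define K where "K = K0 + 2 * s K0 + 1"
  have "sum x {K0..<K} < 1/2" using K0[of K0 K] xnn by (simp add: sum_nonneg)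
  hence "real (s K) * (1/2) \<le> real (s K) * (1 - sum x {K0..<K})"
    by (intro mult_left_mono) auto
  hence "real (s K) * (1/2) \<le> real (s K0)"
    using ind[of K] K_def by linarith
  moreover have "s K \<ge> K" using strict_seq_ge[of s, OF sm, of K] by simp
  ultimately show False unfolding K_def by simp
qed



lemma div_anti: "(0::real) \<le> e \<Longrightarrow> 0 < a \<Longrightarrow> a \<le> b \<Longrightarrow> e / b \<le> e / a"
  by (simp add: divide_left_mono)

lemma Bad_lower:
  fixes x r :: "real ^ 'd"
  assumes "x \<in> Bad r"
  shows "\<exists>c>0. \<forall>n\<ge>1. c \<le> real n * FF r (real n *\<^sub>R x)"
proof -
  let ?f = "\<lambda>n::nat. real n * FF r (real n *\<^sub>R x)"
  have eq: "(\<lambda>n::nat. real n * (rnorm r (real n *\<^sub>R x)) ^ CARD('d)) = ?f"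
    by (simp add: rnorm_pow)
  have pos: "(INF n\<in>{1::nat..}. ?f n) > 0" using assms unfolding Bad_def by (simp add: rnorm_pow)
  have bdd: "bdd_below (?f ` {1..})"
    by (rule bdd_belowI[of _ 0]) (auto intro!: mult_nonneg_nonneg FF_nonneg)
  show ?thesis
    using pos cINF_lower[OF bdd] by (intro exI[of _ "INF n\<in>{1::nat..}. ?f n"]) auto
qed

lemma notBad_small:
  fixes x r :: "real ^ 'd"
  assumes "x \<notin> Bad r" "\<epsilon> > 0"
  shows "\<exists>n\<ge>1. real n * FF r (real n *\<^sub>R x) < \<epsilon>"
proof -
  let ?f = "\<lambda>n::nat. real n * FF r (real n *\<^sub>R x)"
  have eq: "(\<lambda>n::nat. real n * (rnorm r (real n *\<^sub>R x)) ^ CARD('d)) = ?f"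
    by (simp add: rnorm_pow)
  have "(INF n\<in>{1::nat..}. ?f n) \<le> 0" using assms unfolding Bad_def by (simp add: rnorm_pow)
  hence "(INF n\<in>{1::nat..}. ?f n) < \<epsilon>" using assms by linarith
  moreover have bdd: "bdd_below (?f ` {1..})"
    by (rule bdd_belowI[of _ 0]) (auto intro!: mult_nonneg_nonneg FF_nonneg)
  ultimately show ?thesis by (subst (asm) cINF_less_iff) auto
qed

lemma Bad_not_Pi:
  fixes x y r :: "real ^ 'd"
  assumes w: "r \<in> weights" and xb: "x \<in> Bad r"
  shows "(x, y) \<notin> PiSet r"
proof
  assume xy: "(x, y) \<in> PiSet r"
  obtain c where c0: "c > 0" and cb: "\<And>n. n \<ge> 1 \<Longrightarrow> c \<le> real n * FF r (real n *\<^sub>R x)"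
    using Bad_lower[OF xb] by blast
  define K where "K = KK r"
  have K0: "K > 0" unfolding K_def by (rule KK_pos)
  define \<delta> where "\<delta> n = FF r (real n *\<^sub>R x + y)" for n :: nat
  have \<delta>0: "\<delta> n \<ge> 0" for n unfolding \<delta>_def by (rule FF_nonneg)
  have sep: "c / real n \<le> K * (\<delta> n + \<delta> m)" if "1 \<le> m" "m < n" for m n
  proof -
    have "real (n - m) *\<^sub>R x = (real n *\<^sub>R x + y) + - (real m *\<^sub>R x + y)"
      using that by (simp add: of_nat_diff scaleR_diff_left)
    hence "FF r (real (n - m) *\<^sub>R x) \<le> K * (\<delta> n + \<delta> m)"
      using FF_add[OF w, of "real n *\<^sub>R x + y" "- (real m *\<^sub>R x + y)"]
      unfolding K_def \<delta>_def FF_minus by simp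
    moreover have "c \<le> real (n - m) * FF r (real (n - m) *\<^sub>R x)" by (rule cb) (use that in simp)
    moreover have "c / real n \<le> c / real (n - m)"
      using that c0 by (intro div_anti) auto
    moreover have "c / real (n - m) \<le> FF r (real (n - m) *\<^sub>R x)"
      using \<open>c \<le> real (n - m) * FF r (real (n - m) *\<^sub>R x)\<close> that
      by (simp add: divide_le_eq mult.commute del: of_nat_diff)
    ultimately show ?thesis by (meson order_trans)
  qed
  define \<epsilon> where "\<epsilon> = c / (2 * K)"
  have ep0: "\<epsilon> > 0" unfolding \<epsilon>_def using c0 K0 by simp
  define B where "B = {n::nat. n \<ge> 1 \<and> \<delta> n < \<epsilon> / real n}"
  have key: "\<delta> m > \<epsilon> / real n" if "m \<in> B" "n \<in> B" "m < n" for m n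
  proof -
    have "c / real n \<le> K * (\<delta> n + \<delta> m)" using sep that unfolding B_def by simp
    moreover have "\<delta> n < \<epsilon> / real n" using that unfolding B_def by simp
    moreover have "n \<ge> 1" using that unfolding B_def by simp
    ultimately have "c / real n < K * (\<epsilon> / real n) + K * \<delta> m"
      using K0 by (smt (verit, ccfv_SIG) distrib_left mult_strict_left_mono)
    moreover have "K * (\<epsilon> / real n) * 2 = c / real n" unfolding \<epsilon>_def using K0 by (simp add: field_simps)
    moreover have "\<And>A B C::real. C < A + B \<Longrightarrow> A * 2 = C \<Longrightarrow> A < B" by linarith
    ultimately have "K * \<delta> m > K * (\<epsilon> / real n)" by blast
    thus ?thesis using K0 by (meson mult_less_cancel_left_pos)
  qed
  define S where "S = B \<union> {n. n \<ge> 1 \<and> (\<forall>m\<ge>n. m \<notin> B)}"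
  have exS: "\<exists>m. m \<in> S \<and> n < m" for n
  proof (cases "\<exists>m\<ge>Suc n. m \<in> B")
    case True thus ?thesis unfolding S_def by auto
  next
    case False thus ?thesis unfolding S_def by (intro exI[of _ "Suc n"]) auto
  qed
  define b where "b n = (LEAST m. m \<in> S \<and> n < m)" for n
  have bS: "b n \<in> S \<and> n < b n" for n unfolding b_def by (rule LeastI_ex) (rule exS)
  have bmin: "b n \<le> m" if "m \<in> S" "n < m" for m n unfolding b_def using that by (simp add: Least_le)
  have bmono: "b n \<le> b n'" if "n \<le> n'" for n n' using bS[of n'] that by (intro bmin) auto
  have b1: "real (b n) \<ge> 1" for n using bS[of n] by simp
  define \<phi> where "\<phi> n = \<epsilon> / real (b n)" for n
  have \<phi>0: "\<phi> n \<ge> 0" for n unfolding \<phi>_def using ep0 b1[of n] by simp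
  define \<psi> where "\<psi> n = root CARD('d) (\<phi> n)" for n
  have \<psi>pow: "\<psi> n ^ CARD('d) = \<phi> n" for n unfolding \<psi>_def using \<phi>0 by simp
  have \<psi>D: "\<psi> \<in> Dfun TYPE('d)"
    unfolding Dfun_def
  proof (intro CollectI conjI allI impI)
    fix n :: nat show "0 \<le> \<psi> n" unfolding \<psi>_def using \<phi>0 by simp
  next
    fix m n :: nat assume "1 \<le> m \<and> m \<le> n"
    hence "\<phi> n \<le> \<phi> m" unfolding \<phi>_def using ep0 b1 bmono[of m n]
      by (intro div_anti) (auto simp: Suc_le_eq)
    thus "\<psi> n \<le> \<psi> m" unfolding \<psi>_def by simp
  next
    define s where "s = rec_nat (b 0) (\<lambda>_ v. b v)"
    have s0: "s 0 = b 0" and sS: "s (Suc k) = b (s k)" for k unfolding s_def by simp_all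
    have "\<not> summable \<phi>"
    proof (rule block_not_summable[of s \<epsilon>])
      show "s k < s (Suc k)" for k using bS[of "s k"] sS by simp
      show "0 < s 0" using s0 bS[of 0] by simp
      show "0 < \<epsilon>" by (rule ep0)
      show "0 \<le> \<phi> n" for n by (rule \<phi>0)
      fix k n assume "s k \<le> n" "n < s (Suc k)"
      moreover have "s (Suc k) \<in> S" using bS sS by simp
      ultimately have "b n \<le> s (Suc k)" by (intro bmin)
      thus "\<epsilon> / real (s (Suc k)) \<le> \<phi> n" unfolding \<phi>_def using ep0 b1[of n]
        by (intro div_anti) auto
    qed
    hence "\<not> summable (\<lambda>n. \<phi> (n + 1))" using summable_iff_shift[of \<phi> 1] by simp
    thus "\<not> summable (\<lambda>n. \<psi> (n + 1) ^ CARD('d))" by (simp add: \<psi>pow)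
  qed
  have sub: "{n::nat. n \<ge> 1 \<and> rnorm r (real n *\<^sub>R x + y) < \<psi> n} \<subseteq> {n. n \<in> B \<and> (\<forall>m>n. m \<notin> B)}"
  proof safe
    fix n :: nat assume n1: "n \<ge> 1" and lt: "rnorm r (real n *\<^sub>R x + y) < \<psi> n"
    have lt': "\<delta> n < \<phi> n" using lt unfolding rnorm_eq \<psi>_def \<delta>_def by simp
    show nB: "n \<in> B"
    proof (rule ccontr)
      assume "n \<notin> B"
      hence "\<delta> n \<ge> \<epsilon> / real n" using n1 unfolding B_def by auto
      moreover have "\<epsilon> / real n \<ge> \<phi> n" unfolding \<phi>_def using bS[of n] n1 ep0
        by (intro div_anti) auto
      ultimately show False using lt' by linarith
    qed
    fix m assume "n < m" "m \<in> B"
    show False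
    proof (cases "b n \<in> B")
      case True
      have "\<delta> n > \<epsilon> / real (b n)" using key[OF nB True] bS[of n] by simp
      thus False using lt' unfolding \<phi>_def by simp
    next
      case False
      hence "\<forall>k\<ge>b n. k \<notin> B" using bS[of n] unfolding S_def by auto
      moreover have "b n \<le> m" using \<open>n < m\<close> \<open>m \<in> B\<close> by (intro bmin) (auto simp: S_def)
      ultimately show False using \<open>m \<in> B\<close> by auto
    qed
  qed
  have fin: "finite {n. n \<in> B \<and> (\<forall>m>n. m \<notin> B)}"
  proof (cases "{n. n \<in> B \<and> (\<forall>m>n. m \<notin> B)} = {}")
    case False
    then obtain n0 where n0: "n0 \<in> B" "\<forall>m>n0. m \<notin> B" by auto
    have "{n. n \<in> B \<and> (\<forall>m>n. m \<notin> B)} \<subseteq> {n0}"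
      using n0 by (metis (mono_tags, lifting) linorder_neqE_nat mem_Collect_eq singletonI subsetI)
    thus ?thesis using finite_subset by blast
  next
    case True show ?thesis by (subst True) simp
  qed
  have "(x, y) \<in> Wset r \<psi>" using xy \<psi>D unfolding PiSet_def by blast
  hence "infinite {n::nat. n \<ge> 1 \<and> rnorm r (real n *\<^sub>R x + y) < \<psi> n}" unfolding Wset_def by simp
  thus False using fin sub finite_subset by blast
qed



lemma Dfun_pos:
  assumes "\<psi> \<in> Dfun TYPE('d::finite)" "n \<ge> 1"
  shows "\<psi> n > 0"
proof (rule ccontr)
  assume "\<not> \<psi> n > 0"
  hence z: "\<psi> m = 0" if "m \<ge> n" for m
    using assms that unfolding Dfun_def by (smt (verit, best) mem_Collect_eq order_trans)
  have "summable (\<lambda>m. \<psi> (m + n + 1) ^ CARD('d))" using z by (simp add: zero_power)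
  hence "summable (\<lambda>m. \<psi> (m + 1) ^ CARD('d))"
    using summable_iff_shift[of "\<lambda>m. \<psi> (m + 1) ^ CARD('d)" n] by (simp add: add.commute add.left_commute)
  thus False using assms unfolding Dfun_def by simp
qed

lemma WA_case_zero:
  fixes x r :: "real ^ 'd"
  assumes q1: "q \<ge> 1" and q0: "FF r (real q *\<^sub>R x) = 0"
  shows "(x, 0) \<in> PiSet r"
  unfolding PiSet_def
proof
  fix \<psi> assume \<psi>D: "\<psi> \<in> Dfun TYPE('d)"
  have F0: "FF r (real (m * q) *\<^sub>R x) = 0" for m
  proof (rule antisym[OF FF_le FF_nonneg])
    fix i
    show "rpow_comp ((real (m * q) *\<^sub>R x) $ i) (r $ i) \<le> 0"
    proof (cases "r $ i = 0")
      case True thus ?thesis by (simp add: rpow_comp_def)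
    next
      case False
      have "rpow_comp ((real q *\<^sub>R x) $ i) (r $ i) \<le> 0" using FF_ge[of "real q *\<^sub>R x" i r] q0 by simp
      hence "distZ (real q * x $ i) = 0" using False distZ_nonneg[of "real q * x $ i"]
        by (simp add: rpow_comp_def)
      hence "real q * x $ i \<in> \<int>" by (rule distZ_zero_Ints)
      hence "real m * (real q * x $ i) \<in> \<int>" by (simp add: Ints_mult)
      hence "distZ (real (m * q) * x $ i) = 0" by (intro distZ_Ints) (simp add: mult.assoc)
      thus ?thesis using False by (simp add: rpow_comp_def)
    qed
  qed
  have "infinite {n::nat. n \<ge> 1 \<and> rnorm r (real n *\<^sub>R x + 0) < \<psi> n}"
    unfolding infinite_nat_iff_unbounded_le
  proof
    fix m
    have "(m + 1) * q \<ge> m" using q1 by (metis add_leE le_add2 mult.commute mult_le_mono1 nat_mult_1_right one_le_mult_iff)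
    moreover have "(m + 1) * q \<ge> 1" using q1 by simp
    moreover have "\<psi> ((m + 1) * q) > 0" using Dfun_pos[OF \<psi>D] q1 by simp
    ultimately show "\<exists>n\<ge>m. n \<in> {n. 1 \<le> n \<and> rnorm r (real n *\<^sub>R x + 0) < \<psi> n}"
      using F0[of "m+1"] by (intro exI[of _ "(m + 1) * q"]) (simp add: rnorm_eq)
  qed
  thus "(x, 0) \<in> Wset r \<psi>" unfolding Wset_def by simp
qed



lemma geo_sum: "(\<Sum>j. (1/2::real)^j * C) = 2 * C" "summable (\<lambda>j. (1/2::real)^j * C)"
proof -
  have s: "summable (\<lambda>j. (1/2::real)^j)" by (rule summable_geometric) simp
  show "summable (\<lambda>j. (1/2::real)^j * C)" using summable_mult2[OF s] .
  have "(\<Sum>j. (1/2::real)^j) = 2" using suminf_geometric[of "1/2::real"] by simp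
  thus "(\<Sum>j. (1/2::real)^j * C) = 2 * C" using suminf_mult2[OF s, of C] by simp
qed

lemma WA_case_pos:
  fixes x r :: "real ^ 'd"
  assumes w: "r \<in> weights" and xb: "x \<notin> Bad r"
    and pos: "\<And>q. q \<ge> 1 \<Longrightarrow> FF r (real q *\<^sub>R x) > 0"
  shows "\<exists>y. (x, y) \<in> PiSet r"
proof -
  define G where "G q = FF r (real q *\<^sub>R x)" for q :: nat
  have G0: "G q \<ge> 0" for q unfolding G_def by (rule FF_nonneg)
  define K where "K = KK r"
  have K0: "K > 0" unfolding K_def by (rule KK_pos)
  define c where "c = 1 / K"
  have c0: "c > 0" unfolding c_def using K0 by simp
  have rnn: "r $ i \<ge> 0" for i using w unfolding weights_def by simp
  have cpow: "c powr (r $ i) \<le> 1/2" if "r $ i > 0" for i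
  proof -
    have "2 powr (1 / r $ i) \<le> K" unfolding K_def by (rule KK_ge)
    hence "(2 powr (1 / r $ i)) powr (r $ i) \<le> K powr (r $ i)"
      using that by (intro powr_mono2) auto
    hence "2 \<le> K powr (r $ i)" using that by (simp add: powr_powr)
    moreover have "c powr (r $ i) = 1 / K powr (r $ i)" unfolding c_def using K0 by (simp add: powr_divide)
    ultimately show ?thesis using K0 by (simp add: divide_le_eq)
  qed
  obtain q where qP: "\<And>n. q n \<ge> 1 \<and> real (q n) * G (q n) < (1/2)^n"
    and qQ: "\<And>n. G (q (Suc n)) \<le> c * G (q n)"
  proof -
    have "\<exists>f. \<forall>n. (f n \<ge> 1 \<and> real (f n) * G (f n) < (1/2)^n) \<and> G (f (Suc n)) \<le> c * G (f n)"
    proof (rule dependent_nat_choice)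
      show "\<exists>v. v \<ge> 1 \<and> real v * G v < (1/2)^0" using notBad_small[OF xb, of 1] unfolding G_def by auto
    next
      fix v n assume v: "v \<ge> 1 \<and> real v * G v < (1/2)^n"
      have "G v > 0" using pos v unfolding G_def by simp
      hence "min ((1/2)^Suc n) (c * G v) > 0" using c0 by simp
      then obtain u where u: "u \<ge> 1" "real u * G u < min ((1/2)^Suc n) (c * G v)"
        using notBad_small[OF xb] unfolding G_def by blast
      have "G u \<le> real u * G u" using u(1) G0[of u] by (simp add: mult_le_cancel_right1)
      thus "\<exists>u. (u \<ge> 1 \<and> real u * G u < (1/2)^Suc n) \<and> G u \<le> c * G v"
        using u by (intro exI[of _ u]) auto
    qed
    thus ?thesis using that by blast
  qed
  define g where "g j = G (q j)" for j
  have g0: "g j > 0" for j unfolding g_def G_def using pos qP by blast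
  have gpow: "g (k + m) powr (r $ i) \<le> (1/2)^m * g k powr (r $ i)" if ri: "r $ i > 0" for k m i
  proof (induction m)
    case 0 then show ?case by simp
  next
    case (Suc m)
    have "g (k + Suc m) powr (r $ i) \<le> (c * g (k + m)) powr (r $ i)"
      using qQ[of "k + m"] ri g0[of "Suc (k + m)"] unfolding g_def by (intro powr_mono2) (auto simp: less_imp_le)
    also have "\<dots> = c powr (r $ i) * g (k + m) powr (r $ i)" using c0 g0 by (simp add: powr_mult)
    also have "\<dots> \<le> (1/2) * ((1/2)^m * g k powr (r $ i))"
      using cpow[OF ri] Suc by (intro mult_mono) auto
    finally show ?case by simp
  qed
  define z where "z j i = (SOME v. v \<in> \<int> \<and> distZ (real (q j) * x $ i) = \<bar>real (q j) * x $ i - v\<bar>)" for j i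
  have zP: "z j i \<in> \<int> \<and> distZ (real (q j) * x $ i) = \<bar>real (q j) * x $ i - z j i\<bar>" for j i
    unfolding z_def by (rule someI_ex) (use distZ_nearest in blast)
  define E where "E j i = real (q j) * x $ i - z j i" for j i
  have Ebound: "\<bar>E j i\<bar> \<le> g j powr (r $ i)" if ri: "r $ i > 0" for j i
  proof -
    have "distZ (real (q j) * x $ i) powr (1 / r $ i) \<le> g j"
      using FF_ge[of "real (q j) *\<^sub>R x" i r] ri unfolding g_def G_def by (simp add: rpow_comp_def)
    hence "(distZ (real (q j) * x $ i) powr (1 / r $ i)) powr (r $ i) \<le> g j powr (r $ i)"
      using ri by (intro powr_mono2) auto
    hence "distZ (real (q j) * x $ i) \<le> g j powr (r $ i)"
      using ri distZ_nonneg by (simp add: powr_powr powr_one)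
    thus ?thesis using zP[of j i] unfolding E_def by simp
  qed
  have Etail: "\<bar>E (j + k) i\<bar> \<le> (1/2)^j * g k powr (r $ i)" if ri: "r $ i > 0" for j k i
    using Ebound[OF ri, of "j + k"] gpow[OF ri, of k j] by (simp add: add.commute)
  have Esum: "summable (\<lambda>j. E j i)" if ri: "r $ i > 0" for i
    by (rule summable_comparison_test'[OF geo_sum(2)[of "g 0 powr (r $ i)"], of 0])
       (use Etail[OF ri, of _ 0] in simp)
  define y :: "real ^ 'd" where "y = (\<chi> i. if r $ i = 0 then 0 else - (\<Sum>j. E j i))"
  define N where "N k = (\<Sum>j<k. q j)" for k
  have NS: "N (Suc k) = N k + q k" for k unfolding N_def by simp
  have Nge: "N k \<ge> k" for k
  proof (induction k)
    case (Suc k) thus ?case using NS[of k] qP[of k] by linarith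
  qed simp
  have Fbound: "FF r (real (N k) *\<^sub>R x + y) \<le> K * g k" for k
  proof (rule FF_le)
    fix i
    show "rpow_comp ((real (N k) *\<^sub>R x + y) $ i) (r $ i) \<le> K * g k"
    proof (cases "r $ i = 0")
      case True thus ?thesis using K0 g0[of k] by (simp add: rpow_comp_def)
    next
      case False
      hence ri: "r $ i > 0" using rnn[of i] by simp
      let ?t = "(real (N k) *\<^sub>R x + y) $ i"
      let ?T = "\<Sum>j. E (j + k) i"
      have "?t = real (N k) * x $ i - (?T + (\<Sum>j<k. E j i))"
        using False suminf_split_initial_segment[OF Esum[OF ri], of k] unfolding y_def by simp
      also have "real (N k) * x $ i = (\<Sum>j<k. z j i) + (\<Sum>j<k. E j i)"
        unfolding N_def E_def by (simp add: sum_distrib_right sum_subtractf)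
      finally have teq: "?t = (\<Sum>j<k. z j i) - ?T" by simp
      have zi: "(\<Sum>j<k. z j i) \<in> \<int>" using zP by (intro Ints_sum) blast
      have "distZ ?t \<le> \<bar>?t - (\<Sum>j<k. z j i)\<bar>" by (rule distZ_le[OF zi])
      also have "\<dots> = \<bar>?T\<bar>" using teq by simp
      also have "\<dots> \<le> (\<Sum>j. \<bar>E (j + k) i\<bar>)"
        by (rule summable_rabs) (rule summable_comparison_test'[OF geo_sum(2)[of "g k powr (r $ i)"], of 0],
            use Etail[OF ri] in simp)
      also have "\<dots> \<le> (\<Sum>j. (1/2)^j * g k powr (r $ i))"
        by (rule suminf_le) (use Etail[OF ri] geo_sum(2) in \<open>auto intro: summable_comparison_test'[OF geo_sum(2)[of "g k powr (r $ i)"], of 0]\<close>)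
      also have "\<dots> = 2 * g k powr (r $ i)" by (rule geo_sum(1))
      finally have dz: "distZ ?t \<le> 2 * g k powr (r $ i)" .
      have "rpow_comp ?t (r $ i) = distZ ?t powr (1 / r $ i)" using False by (simp add: rpow_comp_def)
      also have "\<dots> \<le> (2 * g k powr (r $ i)) powr (1 / r $ i)"
        using dz ri distZ_nonneg by (intro powr_mono2) auto
      also have "\<dots> = 2 powr (1 / r $ i) * g k"
        using ri g0[of k] by (simp add: powr_mult powr_powr)
      also have "\<dots> \<le> K * g k" unfolding K_def using g0[of k] by (intro mult_right_mono KK_ge) auto
      finally show ?thesis .
    qed
  qed
  show ?thesis
  proof (intro exI[of _ y])
    show "(x, y) \<in> PiSet r" unfolding PiSet_def
    proof
      fix \<psi> assume \<psi>D: "\<psi> \<in> Dfun TYPE('d)"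
      have \<psi>0: "n \<ge> 1 \<Longrightarrow> \<psi> n \<ge> 0" for n using \<psi>D unfolding Dfun_def by simp
      have \<psi>mono: "1 \<le> m \<Longrightarrow> m \<le> n \<Longrightarrow> \<psi> n \<le> \<psi> m" for m n using \<psi>D unfolding Dfun_def by simp
      show "(x, y) \<in> Wset r \<psi>"
      proof (rule ccontr)
        assume "(x, y) \<notin> Wset r \<psi>"
        hence "finite {n::nat. n \<ge> 1 \<and> rnorm r (real n *\<^sub>R x + y) < \<psi> n}" unfolding Wset_def by simp
        then obtain M where M: "\<And>n. n \<ge> 1 \<Longrightarrow> rnorm r (real n *\<^sub>R x + y) < \<psi> n \<Longrightarrow> n < M"
          unfolding finite_nat_set_iff_bounded by blast
        define k0 where "k0 = max M 1"
        have big: "\<psi> n ^ CARD('d) \<le> FF r (real n *\<^sub>R x + y)" if "n \<ge> k0" for n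
        proof -
          have "\<psi> n \<le> rnorm r (real n *\<^sub>R x + y)" using M[of n] that unfolding k0_def by force
          hence "\<psi> n ^ CARD('d) \<le> rnorm r (real n *\<^sub>R x + y) ^ CARD('d)"
            using \<psi>0[of n] that unfolding k0_def by (intro power_mono) auto
          thus ?thesis by (simp add: rnorm_pow)
        qed
        define s where "s k = N (k + k0)" for k
        have sk0: "s k \<ge> k0" for k using Nge[of "k + k0"] unfolding s_def by simp
        have "summable (\<lambda>n. \<psi> n ^ CARD('d))"
        proof (rule block_summable[of s _ "\<lambda>k. FF r (real (s k) *\<^sub>R x + y)"])
          show "s k < s (Suc k)" for k unfolding s_def using NS[of "k + k0"] qP[of "k + k0"] by simp
          show "0 \<le> \<psi> n ^ CARD('d)" if "s 0 \<le> n" for n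
            using \<psi>0[of n] sk0[of 0] that unfolding k0_def by simp
          fix k n assume kn: "s k \<le> n" "n < s (Suc k)"
          have "\<psi> n ^ CARD('d) \<le> \<psi> (s k) ^ CARD('d)"
            using \<psi>mono[of "s k" n] \<psi>0[of n] sk0[of k] kn unfolding k0_def by (intro power_mono) auto
          also have "\<dots> \<le> FF r (real (s k) *\<^sub>R x + y)" by (rule big[OF sk0])
          finally show "\<psi> n ^ CARD('d) \<le> FF r (real (s k) *\<^sub>R x + y)" .
        next
          show "summable (\<lambda>k. (real (s (Suc k)) - real (s k)) * FF r (real (s k) *\<^sub>R x + y))"
          proof (rule summable_comparison_test'[of "\<lambda>k. K * (1/2)^(k + k0)" 0])
            show "summable (\<lambda>k. K * (1/2)^(k + k0))"
              by (rule summable_mult) (simp add: summable_iff_shift[of "\<lambda>k. (1/2::real)^k" k0] summable_geometric)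
            fix k
            have eq: "real (s (Suc k)) - real (s k) = real (q (k + k0))" unfolding s_def using NS[of "k + k0"] by simp
            have "real (q (k + k0)) * FF r (real (s k) *\<^sub>R x + y) \<le> real (q (k + k0)) * (K * g (k + k0))"
              using Fbound[of "k + k0"] unfolding s_def by (intro mult_left_mono) auto
            also have "\<dots> = K * (real (q (k + k0)) * G (q (k + k0)))" unfolding g_def by simp
            also have "\<dots> \<le> K * (1/2)^(k + k0)" using qP[of "k + k0"] K0 by (intro mult_left_mono) auto
            finally show "norm ((real (s (Suc k)) - real (s k)) * FF r (real (s k) *\<^sub>R x + y)) \<le> K * (1/2)^(k + k0)"
              using eq FF_nonneg[of r "real (s k) *\<^sub>R x + y"] by simp
          qed
        qed
        hence "summable (\<lambda>n. \<psi> (n + 1) ^ CARD('d))" using summable_iff_shift[of "\<lambda>n. \<psi> n ^ CARD('d)" 1] by simp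
        thus False using \<psi>D unfolding Dfun_def by simp
      qed
    qed
  qed
qed

theorem theorem14:
  fixes r :: "real ^ 'd"
  assumes "r \<in> weights"
  shows "WA r = fst ` PiSet r \<and> Bad r = UNIV - fst ` PiSet r"
proof -
  have "WA r = fst ` PiSet r"
  proof
    show "WA r \<subseteq> fst ` PiSet r"
    proof
      fix x assume "x \<in> WA r"
      hence xb: "x \<notin> Bad r" unfolding WA_def by simp
      have "\<exists>y. (x, y) \<in> PiSet r"
      proof (cases "\<exists>q\<ge>1. FF r (real q *\<^sub>R x) = 0")
        case True
        then obtain q where "q \<ge> 1" "FF r (real q *\<^sub>R x) = 0" by blast
        thus ?thesis using WA_case_zero by blast
      next
        case False
        hence "\<And>q. q \<ge> 1 \<Longrightarrow> FF r (real q *\<^sub>R x) > 0" using FF_nonneg less_le by metis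
        thus ?thesis using WA_case_pos[OF assms xb] by blast
      qed
      then obtain y where "(x, y) \<in> PiSet r" by blast
      thus "x \<in> fst ` PiSet r" by force
    qed
  next
    show "fst ` PiSet r \<subseteq> WA r"
    proof
      fix x assume "x \<in> fst ` PiSet r"
      then obtain y where "(x, y) \<in> PiSet r" by force
      thus "x \<in> WA r" using Bad_not_Pi[OF assms] unfolding WA_def by blast
    qed
  qed
  thus ?thesis unfolding WA_def by auto
qed


end
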